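(* Let $n\ge 2$ be even. Then each of the $n$ cusps of $F_n$ lying above $\infty$ (the points $(X:Y:0)$ of $F_n$) is ramified in the cover $C_n\to F_n$ with ramification index exactly $2$. Equivalently, every point of $C_n$ above $\infty$ has ramification index $2n$ in the cover $C_n\to C_n/H_n\cong\mathbb{P}^1$.
   Context: $\Delta=\langle a,b\rangle\subset\mathrm{SL}(2,\mathbb{Z})$ with $a=\begin{pmatrix}1&2\\0&1\end{pmatrix}$, $b=\begin{pmatrix}1&0\\2&1\end{pmatrix}$; $H_n$ is the Heisenberg group of upper unitriangular $3\times3$ matrices over $\mathbb{Z}/n\mathbb{Z}$ generated by $a_H=I+E_{12}$, $b_H=I+E_{23}$, with center $Z_n$. $\phi:\Delta\to H_n$, $a\mapsto a_H$, $b\mapsto b_H$; $\psi:\Delta\to(\mathbb{Z}/n\mathbb{Z})^2$, $a\mapsto(1,0)$, $b\mapsto(0,1)$. $C_n$ (Heisenberg curve) and $F_n$ (Fermat curve) are the compactifications by cusps of $\ker\phi\backslash\mathbb{H}$ and $\ker\psi\backslash\mathbb{H}$; $C_n\to F_n$ is Galois with group $Z_n$ and $C_n\to\mathbb{P}^1=\Delta\backslash\mathbb{H}\cup\{\text{cusps}\}$ is Galois with group $H_n$. $F_n$ is identified with the projective curve $X^n+Y^n=Z^n$, the map $F_n\to\mathbb{P}^1$ being $(X:Y:Z)\mapsto(X/Z)^n$. *)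

theory Defs
  imports "HOL-Analysis.Analysis"
begin

text \<open>Letters of words in the generators a, b of Delta and their inverses.\<close>
datatype letter = LA | LAinv | LB | LBinv

type_synonym mat2 = "int^2^2"

definition matA :: mat2 where "matA = vector [vector [1, 2], vector [0, 1]]"
definition matAinv :: mat2 where "matAinv = vector [vector [1, -2], vector [0, 1]]"
definition matB :: mat2 where "matB = vector [vector [1, 0], vector [2, 1]]"
definition matBinv :: mat2 where "matBinv = vector [vector [1, 0], vector [-2, 1]]"

fun sl_of :: "letter \<Rightarrow> mat2" where
  "sl_of LA = matA" | "sl_of LAinv = matAinv" | "sl_of LB = matB" | "sl_of LBinv = matBinv"

definition eval_SL :: "letter list \<Rightarrow> mat2" where
  "eval_SL w = foldr (\<lambda>l M. sl_of l ** M) w (mat 1)"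

definition Delta :: "mat2 set" where "Delta = range eval_SL"

text \<open>Heisenberg group: (x,y,z) stands for the matrix I + x E12 + y E23 + z E13,
  entries taken modulo n.\<close>
definition heis_mult :: "int \<times> int \<times> int \<Rightarrow> int \<times> int \<times> int \<Rightarrow> int \<times> int \<times> int" where
  "heis_mult p q = (case p of (x, y, z) \<Rightarrow> case q of (x', y', z') \<Rightarrow>
      (x + x', y + y', z + z' + x * y'))"

fun heis_of :: "letter \<Rightarrow> int \<times> int \<times> int" where
  "heis_of LA = (1, 0, 0)" | "heis_of LAinv = (-1, 0, 0)"
| "heis_of LB = (0, 1, 0)" | "heis_of LBinv = (0, -1, 0)"

definition eval_H :: "letter list \<Rightarrow> int \<times> int \<times> int" where
  "eval_H w = foldr (\<lambda>l h. heis_mult (heis_of l) h) w (0, 0, 0)"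

definition heis_trivial :: "nat \<Rightarrow> int \<times> int \<times> int \<Rightarrow> bool" where
  "heis_trivial n h = (case h of (x, y, z) \<Rightarrow>
      x mod int n = 0 \<and> y mod int n = 0 \<and> z mod int n = 0)"

text \<open>ker phi, phi : Delta \<rightarrow> H_n, a \<mapsto> a_H, b \<mapsto> b_H (Delta is free on a, b).\<close>
definition ker_phi :: "nat \<Rightarrow> mat2 set" where
  "ker_phi n = {eval_SL w | w. heis_trivial n (eval_H w)}"

fun psi_of :: "letter \<Rightarrow> int \<times> int" where
  "psi_of LA = (1, 0)" | "psi_of LAinv = (-1, 0)"
| "psi_of LB = (0, 1)" | "psi_of LBinv = (0, -1)"

definition eval_psi :: "letter list \<Rightarrow> int \<times> int" where
  "eval_psi w = foldr (\<lambda>l p. (fst (psi_of l) + fst p, snd (psi_of l) + snd p)) w (0, 0)"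

definition ker_psi :: "nat \<Rightarrow> mat2 set" where
  "ker_psi n = {eval_SL w | w. fst (eval_psi w) mod int n = 0 \<and> snd (eval_psi w) mod int n = 0}"

text \<open>Stabilizer in G of the cusp (p:q) of P^1(Q), given by a primitive vector v = (p,q).\<close>
definition cusp_stab :: "mat2 set \<Rightarrow> int^2 \<Rightarrow> mat2 set" where
  "cusp_stab G v = {g \<in> G. g *v v = v \<or> g *v v = - v}"

definition subgroup_index :: "mat2 set \<Rightarrow> mat2 set \<Rightarrow> nat" where
  "subgroup_index A B = card ((\<lambda>g. (\<lambda>h. g ** h) ` B) ` A)"

text \<open>Ramification index at the cusp v of the cover Gamma'\H* \<rightarrow> Gamma\H*
  (Gamma' \<subseteq> Gamma, neither containing -I): index of cusp stabilizers.\<close>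
definition ram_index :: "mat2 set \<Rightarrow> mat2 set \<Rightarrow> int^2 \<Rightarrow> nat" where
  "ram_index G' G v = subgroup_index (cusp_stab G v) (cusp_stab G' v)"

text \<open>Primitive vector of the cusp 1 = (1:1), the cusp of Delta over \<infinity> \<in> P^1
  under the identification F_n = {X^n+Y^n=Z^n}, F_n \<rightarrow> P^1 being (X/Z)^n.\<close>
definition cusp_one :: "int^2" where "cusp_one = vector [1, 1]"

end

theory Submission
  imports Defs
begin


definition mk :: "int \<Rightarrow> int \<Rightarrow> int \<Rightarrow> int \<Rightarrow> mat2" where
  "mk a b c d = vector [vector [a, b], vector [c, d]]"

lemma mk_nth [simp]: "mk a b c d $1$1 = a" "mk a b c d $1$2 = b" "mk a b c d $2$1 = c" "mk a b c d $2$2 = d"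
  by (simp_all add: mk_def)

lemma mat2_eq: "(M::mat2) = mk (M$1$1) (M$1$2) (M$2$1) (M$2$2)"
  by (simp add: vec_eq_iff forall_2)

lemma mk_eq_iff: "mk a b c d = mk a' b' c' d' \<longleftrightarrow> a = a' \<and> b = b' \<and> c = c' \<and> d = d'"
  by (metis mk_nth)

lemma mk_mult: "mk a b c d ** mk e f g h = mk (a*e+b*g) (a*f+b*h) (c*e+d*g) (c*f+d*h)"
  by (simp add: vec_eq_iff forall_2 matrix_matrix_mult_def sum_2)

lemma mk_one: "mat 1 = mk 1 0 0 1"
  by (simp add: vec_eq_iff forall_2 mat_def)

lemma mk_vec: "mk a b c d *v v = vector [a * v$1 + b * v$2, c * v$1 + d * v$2]"
  by (simp add: vec_eq_iff forall_2 matrix_vector_mult_def sum_2)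

lemma gens: "matA = mk 1 2 0 1" "matAinv = mk 1 (-2) 0 1" "matB = mk 1 0 2 1" "matBinv = mk 1 0 (-2) 1"
  by (simp_all add: mk_def matA_def matAinv_def matB_def matBinv_def)

lemma cusp_one_nth [simp]: "cusp_one $ 1 = 1" "cusp_one $ 2 = 1"
  by (simp_all add: cusp_one_def)



fun linv :: "letter \<Rightarrow> letter" where
  "linv LA = LAinv" | "linv LAinv = LA" | "linv LB = LBinv" | "linv LBinv = LB"

lemma linv_linv [simp]: "linv (linv l) = l" by (cases l) auto

definition invw :: "letter list \<Rightarrow> letter list" where "invw w = rev (map linv w)"

lemma invw_invw [simp]: "invw (invw w) = w"
  by (simp add: invw_def rev_map comp_def)

lemma eval_SL_append: "eval_SL (u @ v) = eval_SL u ** eval_SL v"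
  by (induction u) (simp_all add: eval_SL_def matrix_mul_assoc)

lemma eval_SL_Nil [simp]: "eval_SL [] = mat 1" by (simp add: eval_SL_def)
lemma eval_SL_Cons: "eval_SL (l # w) = sl_of l ** eval_SL w" by (simp add: eval_SL_def)

lemma sl_linv: "sl_of l ** sl_of (linv l) = mat 1"
  by (cases l) (simp_all add: gens mk_mult mk_one)

lemma heis_assoc: "heis_mult (heis_mult p q) r = heis_mult p (heis_mult q r)"
  by (cases p; cases q; cases r) (simp add: heis_mult_def algebra_simps)

lemma heis_unit [simp]: "heis_mult p (0,0,0) = p" "heis_mult (0,0,0) p = p"
  by (cases p; simp add: heis_mult_def)+

lemma eval_H_Nil [simp]: "eval_H [] = (0,0,0)" by (simp add: eval_H_def)
lemma eval_H_Cons: "eval_H (l # w) = heis_mult (heis_of l) (eval_H w)" by (simp add: eval_H_def)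

lemma eval_H_append: "eval_H (u @ v) = heis_mult (eval_H u) (eval_H v)"
  by (induction u) (simp_all add: eval_H_Cons heis_assoc)

lemma heis_linv: "heis_mult (heis_of l) (heis_mult (heis_of (linv l)) h) = h"
  by (cases l; cases h) (simp_all add: heis_mult_def)

fun reduced :: "letter list \<Rightarrow> bool" where
  "reduced (x # y # r) = (y \<noteq> linv x \<and> reduced (y # r))"
| "reduced _ = True"

lemma not_reduced: "\<not> reduced w \<Longrightarrow> \<exists>u l v. w = u @ l # linv l # v"
proof (induction w rule: reduced.induct)
  case (1 x y r)
  show ?case
  proof (cases "y = linv x")
    case True then show ?thesis by (metis append_Nil)
  next
    case False
    with 1 obtain u l v where "y # r = u @ l # linv l # v" by auto
    then have "x # y # r = (x # u) @ l # linv l # v" by simp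
    then show ?thesis by blast
  qed
qed auto

fun reg :: "letter \<Rightarrow> int^2 \<Rightarrow> bool" where
  "reg LA p = ((0 < p$2 \<and> p$2 < p$1) \<or> (p$1 < p$2 \<and> p$2 < 0))"
| "reg LAinv p = ((0 < p$2 \<and> p$2 < - p$1) \<or> (- p$1 < p$2 \<and> p$2 < 0))"
| "reg LB p = ((0 < p$1 \<and> p$1 < p$2) \<or> (p$2 < p$1 \<and> p$1 < 0))"
| "reg LBinv p = ((0 < p$1 \<and> p$1 < - p$2) \<or> (- p$2 < p$1 \<and> p$1 < 0))"

lemma reg_letter: "reg q p \<Longrightarrow> q \<noteq> linv l \<Longrightarrow> reg l (sl_of l *v p)"
  by (cases l; cases q) (auto simp: gens mk_vec)

lemma reg_disj: "reg l p \<Longrightarrow> reg l' p \<Longrightarrow> l = l'"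
  by (cases l; cases l') auto

lemma pingpong: "reduced (l # w) \<Longrightarrow> reg q p \<Longrightarrow> q \<noteq> linv (last (l # w))
   \<Longrightarrow> reg l (eval_SL (l # w) *v p)"
proof (induction w arbitrary: l)
  case Nil then show ?case by (simp add: reg_letter eval_SL_Cons)
next
  case (Cons l' w)
  then have "reg l' (eval_SL (l' # w) *v p)" by auto
  moreover have "l' \<noteq> linv l" using Cons.prems by auto
  ultimately have "reg l (sl_of l *v (eval_SL (l' # w) *v p))"
    by (metis reg_letter linv_linv)
  then show ?case by (simp add: eval_SL_Cons matrix_vector_mul_assoc)
qed

lemma reg_exists: "\<exists>p. reg q p"
proof (cases q)
  case LA then show ?thesis by (intro exI[of _ "vector [2,1]"]) simp
next
  case LAinv then show ?thesis by (intro exI[of _ "vector [-2,1]"]) simp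
next
  case LB then show ?thesis by (intro exI[of _ "vector [1,2]"]) simp
next
  case LBinv then show ?thesis by (intro exI[of _ "vector [-1,2]"]) simp
qed

lemma reduced_ne_one: "reduced w \<Longrightarrow> w \<noteq> [] \<Longrightarrow> eval_SL w \<noteq> mat 1"
proof -
  assume r: "reduced w" and ne: "w \<noteq> []"
  then obtain l w' where w: "w = l # w'" by (cases w) auto
  obtain q where q1: "q \<noteq> linv (last w)" and q2: "q \<noteq> l"
  proof -
    have "\<exists>q. q \<noteq> linv (last w) \<and> q \<noteq> l"
      by (cases "linv (last w)"; cases l) auto
    then show ?thesis using that by blast
  qed
  obtain p where p: "reg q p" using reg_exists by blast
  have "reg l (eval_SL w *v p)" using pingpong[of l w' q p] r p q1 w by simp
  then show ?thesis using p q2 reg_disj by force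
qed

lemma free_H: "eval_SL w = mat 1 \<Longrightarrow> eval_H w = (0,0,0)"
proof (induction "length w" arbitrary: w rule: less_induct)
  case less
  show ?case
  proof (cases "reduced w")
    case True
    then have "w = []" using reduced_ne_one less.prems by blast
    then show ?thesis by simp
  next
    case False
    then obtain u l v where w: "w = u @ l # linv l # v" using not_reduced by blast
    have "eval_SL (l # linv l # v) = eval_SL v"
      by (metis eval_SL_Cons matrix_mul_assoc sl_linv matrix_mul_lid)
    then have "eval_SL (u @ v) = mat 1" using less.prems w by (simp add: eval_SL_append)
    then have "eval_H (u @ v) = (0,0,0)" using less w by force
    moreover have "eval_H (l # linv l # v) = eval_H v"
      by (simp add: eval_H_Cons heis_linv)
    ultimately show ?thesis using w by (simp add: eval_H_append)
  qed
qed



lemma eval_SL_invw: "eval_SL (w @ invw w) = mat 1"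
proof (induction w)
  case (Cons l w)
  have "eval_SL ((l # w) @ invw (l # w)) = sl_of l ** (eval_SL (w @ invw w) ** sl_of (linv l))"
    by (simp add: invw_def eval_SL_append eval_SL_Cons matrix_mul_assoc)
  also have "\<dots> = mat 1" using Cons by (simp add: sl_linv)
  finally show ?case .
qed (simp add: invw_def)

lemma eval_SL_invw2: "eval_SL (invw w) ** eval_SL w = mat 1"
  using eval_SL_invw[of "invw w"] by (simp add: eval_SL_append)

lemma eval_SL_invw1: "eval_SL w ** eval_SL (invw w) = mat 1"
  using eval_SL_invw[of w] by (simp add: eval_SL_append)

definition heis_inv :: "int \<times> int \<times> int \<Rightarrow> int \<times> int \<times> int" where
  "heis_inv p = (case p of (x, y, z) \<Rightarrow> (-x, -y, -z + x * y))"

lemma heis_right_cancel: "heis_mult p r = (0,0,0) \<Longrightarrow> heis_mult q r = (0,0,0) \<Longrightarrow> p = q"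
proof -
  obtain a b c where p: "p = (a,b,c)" by (cases p) auto
  obtain a' b' c' where q: "q = (a',b',c')" by (cases q) auto
  obtain x y z where r: "r = (x,y,z)" by (cases r) auto
  assume "heis_mult p r = (0,0,0)" "heis_mult q r = (0,0,0)"
  then have e: "a + x = 0" "a' + x = 0" "b + y = 0" "b' + y = 0" "c + z + a * y = 0" "c' + z + a' * y = 0"
    by (simp_all add: p q r heis_mult_def)
  then have "a = a'" by simp
  with e show ?thesis by (simp add: p q)
qed

lemma heis_inv_unique: "heis_mult p r = (0,0,0) \<Longrightarrow> r = heis_inv p"
proof -
  obtain a b c where p: "p = (a,b,c)" by (cases p) auto
  obtain x y z where r: "r = (x,y,z)" by (cases r) auto
  assume "heis_mult p r = (0,0,0)"
  then have e: "a + x = 0" "b + y = 0" "c + z + a * y = 0"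
    by (simp_all add: p r heis_mult_def)
  then have "y = -b" by simp
  with e show ?thesis by (simp add: p r heis_inv_def)
qed

lemma eval_H_invw: "eval_H (invw w) = heis_inv (eval_H w)"
  using free_H[OF eval_SL_invw[of w]] by (simp add: eval_H_append heis_inv_unique)

lemma well_def: "eval_SL w = eval_SL w' \<Longrightarrow> eval_H w = eval_H w'"
proof -
  assume e: "eval_SL w = eval_SL w'"
  have "eval_SL (w @ invw w') = mat 1" using e eval_SL_invw1[of w'] by (simp add: eval_SL_append)
  from free_H[OF this] have "heis_mult (eval_H w) (eval_H (invw w')) = (0,0,0)"
    by (simp add: eval_H_append)
  moreover have "heis_mult (eval_H w') (eval_H (invw w')) = (0,0,0)"
    using free_H[OF eval_SL_invw[of w']] by (simp add: eval_H_append)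
  ultimately show ?thesis by (rule heis_right_cancel)
qed

lemma eval_psi_H: "eval_psi w = (fst (eval_H w), fst (snd (eval_H w)))"
proof (induction w)
  case Nil then show ?case by (simp add: eval_psi_def)
next
  case (Cons l w)
  obtain x y z where h: "eval_H w = (x,y,z)" by (cases "eval_H w") auto
  show ?case using Cons h by (cases l) (simp_all add: eval_psi_def eval_H_Cons heis_mult_def)
qed

definition Pinv :: "mat2 \<Rightarrow> bool" where
  "Pinv M = (M$1$1 * M$2$2 - M$1$2 * M$2$1 = 1 \<and> M$1$1 mod 4 = 1 \<and> M$2$2 mod 4 = 1
     \<and> even (M$1$2) \<and> even (M$2$1))"

lemma Pinv_eval: "Pinv (eval_SL w)"
proof (induction w)
  case Nil then show ?case by (simp add: Pinv_def mk_one)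
next
  case (Cons l w)
  obtain a b c d where M: "eval_SL w = mk a b c d" using mat2_eq by blast
  have h: "a*d - b*c = 1" "a mod 4 = 1" "d mod 4 = 1" "even b" "even c"
    using Cons M by (simp_all add: Pinv_def)
  show ?case
    using h by (cases l) (simp_all add: eval_SL_Cons M gens mk_mult Pinv_def algebra_simps, presburger+)
qed

definition Cmat :: "int \<Rightarrow> mat2" where
  "Cmat k = (let s = (if even k then 1 else -1) in mk (s*(1+2*k)) (s*(-2*k)) (s*(2*k)) (s*(1-2*k)))"

lemma Cmat_add: "Cmat j ** Cmat k = Cmat (j + k)"
  by (cases "even j"; cases "even k") (simp_all add: Cmat_def mk_mult mk_eq_iff algebra_simps)

lemma Cmat_inj: "Cmat j = Cmat k \<Longrightarrow> j = k"
  by (cases "even j"; cases "even k") (auto simp: Cmat_def mk_eq_iff)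

lemma Cmat_vec: "Cmat k *v cusp_one = cusp_one \<or> Cmat k *v cusp_one = - cusp_one"
  by (cases "even k") (simp_all add: Cmat_def mk_vec vec_eq_iff forall_2 cusp_one_def)

lemma stab_Cmat:
  assumes P: "Pinv M" and v: "M *v cusp_one = cusp_one \<or> M *v cusp_one = - cusp_one"
  shows "\<exists>k. M = Cmat k"
proof -
  obtain p q r d where M: "M = mk p q r d" using mat2_eq by blast
  have h: "p*d - q*r = 1" "p mod 4 = 1" "d mod 4 = 1" "even q" "even r"
    using P M by (simp_all add: Pinv_def)
  from v consider "p + q = 1" "r + d = 1" | "p + q = -1" "r + d = -1"
    by (auto simp: M mk_vec vec_eq_iff forall_2)
  then show ?thesis
  proof cases
    case 1
    then have "q = 1 - p" "r = 1 - d" by auto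
    with h(1) have "p*d - (1-p)*(1-d) = 1" by simp
    then have ps: "p + d = 2" by (simp add: algebra_simps)
    obtain t where t: "q = 2*t" using h(4) by blast
    have "even t" using h(2) t `q = 1 - p` by presburger
    then have "M = Cmat (-t)" using M ps t `q = 1 - p` `r = 1 - d` by (simp add: Cmat_def mk_eq_iff)
    then show ?thesis by blast
  next
    case 2
    then have "q = -1 - p" "r = -1 - d" by auto
    with h(1) have "p*d - (-1-p)*(-1-d) = 1" by simp
    then have ps: "p + d = -2" by (simp add: algebra_simps)
    obtain t where t: "q = 2*t" using h(4) by blast
    have "odd t" using h(2) t `q = -1 - p` by presburger
    then have "M = Cmat t" using M ps t `q = -1 - p` `r = -1 - d` by (simp add: Cmat_def mk_eq_iff)
    then show ?thesis by blast
  qed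
qed



definition hz :: "int \<Rightarrow> int" where "hz k = - (k * (k + 1) div 2)"

lemma hz_succ: "hz (k + 1) = hz k - (k + 1)"
proof -
  have "(k + 1) * (k + 1 + 1) = k * (k + 1) + (k + 1) * 2" by algebra
  then show ?thesis by (simp add: hz_def)
qed

lemma hz_pred: "hz (k - 1) = hz k + k"
  using hz_succ[of "k - 1"] by simp

lemma Cmat_one: "matA ** matBinv = Cmat 1"
  by (simp add: gens mk_mult Cmat_def)

lemma Cmat_mone: "matB ** matAinv = Cmat (-1)"
  by (simp add: gens mk_mult Cmat_def)

lemma cpos: "eval_SL (concat (replicate m [LA, LBinv])) = Cmat (int m) \<and>
   eval_H (concat (replicate m [LA, LBinv])) = (int m, - int m, hz (int m))"
proof (induction m)
  case 0 then show ?case by (simp add: Cmat_def mk_one hz_def)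
next
  case (Suc m)
  have "eval_SL (concat (replicate (Suc m) [LA, LBinv])) = (matA ** matBinv) ** Cmat (int m)"
    using Suc by (simp add: eval_SL_append eval_SL_Cons matrix_mul_assoc)
  also have "\<dots> = Cmat (int (Suc m))" by (simp add: Cmat_one Cmat_add add.commute)
  moreover have "hz (1 + int m) = hz (int m) - (1 + int m)" using hz_succ[of "int m"] by (simp add: add.commute)
  ultimately show ?case using Suc
    by (simp add: eval_H_append eval_H_Cons heis_mult_def)
qed

lemma cneg: "eval_SL (concat (replicate m [LB, LAinv])) = Cmat (- int m) \<and>
   eval_H (concat (replicate m [LB, LAinv])) = (- int m, int m, hz (- int m))"
proof (induction m)
  case 0 then show ?case by (simp add: Cmat_def mk_one hz_def)
next
  case (Suc m)
  have "eval_SL (concat (replicate (Suc m) [LB, LAinv])) = (matB ** matAinv) ** Cmat (- int m)"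
    using Suc by (simp add: eval_SL_append eval_SL_Cons matrix_mul_assoc)
  also have "\<dots> = Cmat (- int (Suc m))" by (simp add: Cmat_mone Cmat_add add.commute)
  moreover have "hz (- 1 - int m) = hz (- int m) - int m"
  proof -
    have e: "- 1 - int m = - int m - 1" by simp
    show ?thesis using hz_pred[of "- int m"] unfolding e by simp
  qed
  ultimately show ?case using Suc
    by (simp add: eval_H_append eval_H_Cons heis_mult_def)
qed

lemma cpow: "\<exists>w. eval_SL w = Cmat k \<and> eval_H w = (k, -k, hz k)"
proof (cases "k \<ge> 0")
  case True
  then show ?thesis using cpos[of "nat k"] by (intro exI[of _ "concat (replicate (nat k) [LA, LBinv])"]) simp
next
  case False
  then show ?thesis using cneg[of "nat (-k)"] by (intro exI[of _ "concat (replicate (nat (-k)) [LB, LAinv])"]) simp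
qed

lemma mv_neg: "(A::mat2) *v (- x) = - (A *v x)"
  by (simp add: vec_eq_iff matrix_vector_mult_def sum_negf)

lemma stab_char:
  assumes G: "G = {eval_SL w | w. cond (eval_H w)}"
  and c1: "\<And>p q. cond p \<Longrightarrow> cond (heis_mult (heis_inv q) (heis_mult p q))"
  and c2: "\<And>p q. cond p \<Longrightarrow> cond (heis_mult q (heis_mult p (heis_inv q)))"
  shows "cusp_stab G (eval_SL u *v cusp_one)
     = (\<lambda>k. eval_SL u ** Cmat k ** eval_SL (invw u)) ` {k. cond (k, -k, hz k)}"
proof
  let ?g = "eval_SL u" and ?gi = "eval_SL (invw u)"
  show "cusp_stab G (?g *v cusp_one) \<subseteq> (\<lambda>k. ?g ** Cmat k ** ?gi) ` {k. cond (k, -k, hz k)}"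
  proof
    fix h assume "h \<in> cusp_stab G (?g *v cusp_one)"
    then obtain w where hw: "h = eval_SL w" and cw: "cond (eval_H w)"
      and hv: "h *v (?g *v cusp_one) = ?g *v cusp_one \<or> h *v (?g *v cusp_one) = - (?g *v cusp_one)"
      by (auto simp: cusp_stab_def G)
    define M where "M = eval_SL (invw u @ w @ u)"
    have M: "M = ?gi ** h ** ?g" by (simp add: M_def eval_SL_append hw matrix_mul_assoc)
    have "M *v cusp_one = ?gi *v (h *v (?g *v cusp_one))"
      by (simp add: M matrix_vector_mul_assoc matrix_mul_assoc)
    moreover have gg: "?gi *v (?g *v cusp_one) = cusp_one" by (simp add: matrix_vector_mul_assoc eval_SL_invw2)
    ultimately have "M *v cusp_one = cusp_one \<or> M *v cusp_one = - cusp_one"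
      using hv by (metis mv_neg)
    then obtain k where k: "M = Cmat k" using stab_Cmat Pinv_eval M_def by blast
    obtain w' where w': "eval_SL w' = Cmat k" "eval_H w' = (k, -k, hz k)" using cpow by blast
    have "eval_H (invw u @ w @ u) = (k, -k, hz k)" using well_def[of "invw u @ w @ u" w'] k w' M_def by simp
    then have ck: "cond (k, -k, hz k)" using c1[OF cw, of "eval_H u"] by (simp add: eval_H_append eval_H_invw)
    have "?g ** M ** ?gi = h"
      by (simp add: M matrix_mul_assoc eval_SL_invw1 flip: matrix_mul_assoc)
         (simp add: matrix_mul_assoc eval_SL_invw1)
    then show "h \<in> (\<lambda>k. ?g ** Cmat k ** ?gi) ` {k. cond (k, -k, hz k)}" using k ck by auto
  qed
  show "(\<lambda>k. ?g ** Cmat k ** ?gi) ` {k. cond (k, -k, hz k)} \<subseteq> cusp_stab G (?g *v cusp_one)"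
  proof
    fix h assume "h \<in> (\<lambda>k. ?g ** Cmat k ** ?gi) ` {k. cond (k, -k, hz k)}"
    then obtain k where h: "h = ?g ** Cmat k ** ?gi" and ck: "cond (k, -k, hz k)" by auto
    obtain w' where w': "eval_SL w' = Cmat k" "eval_H w' = (k, -k, hz k)" using cpow by blast
    have "eval_SL (u @ w' @ invw u) = h" by (simp add: h eval_SL_append w' matrix_mul_assoc)
    moreover have "cond (eval_H (u @ w' @ invw u))"
      using c2[OF ck, of "eval_H u"] by (simp add: eval_H_append eval_H_invw w')
    ultimately have hG: "h \<in> G" using G by blast
    have "h *v (?g *v cusp_one) = ?g *v (Cmat k *v cusp_one)"
      by (simp add: h matrix_vector_mul_assoc eval_SL_invw2 flip: matrix_mul_assoc)
    then show "h \<in> cusp_stab G (?g *v cusp_one)"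
      using hG Cmat_vec[of k] by (auto simp: cusp_stab_def mv_neg)
  qed
qed



lemma index_lemma:
  fixes F :: "int \<Rightarrow> mat2" and d :: int and e :: nat
  assumes hom: "\<And>a b. F a ** F b = F (a + b)" and inj: "inj F" and d: "d > 0" and e: "e > 0"
  shows "card ((\<lambda>x. (\<lambda>h. x ** h) ` (F ` {k. d * int e dvd k})) ` (F ` {k. d dvd k})) = e"
proof -
  define m where "m = d * int e"
  have m: "m > 0" using d e by (simp add: m_def)
  define Cos where "Cos j = F ` {k. m dvd k - j}" for j
  have coset: "(\<lambda>h. F i ** h) ` (F ` {k. m dvd k}) = Cos i" for i
  proof -
    have "(\<lambda>h. F i ** h) ` (F ` {k. m dvd k}) = F ` ((\<lambda>k. i + k) ` {k. m dvd k})"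
      by (simp add: image_image hom)
    also have "(\<lambda>k. i + k) ` {k. m dvd k} = {k. m dvd k - i}"
    proof (auto)
      fix k assume "m dvd k - i"
      then show "k \<in> (+) i ` {k. m dvd k}" by (intro image_eqI[of _ _ "k - i"]) auto
    qed
    finally show ?thesis by (simp add: Cos_def)
  qed
  have fam: "(\<lambda>x. (\<lambda>h. x ** h) ` (F ` {k. m dvd k})) ` (F ` {k. d dvd k}) = Cos ` {k. d dvd k}"
  proof -
    have "(\<lambda>x. (\<lambda>h. x ** h) ` (F ` {k. m dvd k})) ` (F ` {k. d dvd k})
        = (\<lambda>i. (\<lambda>h. F i ** h) ` (F ` {k. m dvd k})) ` {k. d dvd k}" by (rule image_image)
    also have "\<dots> = Cos ` {k. d dvd k}" by (simp only: coset)
    finally show ?thesis .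
  qed
  have cmod: "Cos i = Cos (i mod m)" for i
  proof -
    have "m dvd i - i mod m" by (simp add: minus_mod_eq_mult_div)
    then have "m dvd k - i \<longleftrightarrow> m dvd k - i mod m" for k
      by (metis diff_diff_eq2 dvd_diff diff_add_cancel dvd_add)
    then show ?thesis by (simp add: Cos_def)
  qed
  have eqs: "Cos ` {k. d dvd k} = (\<lambda>t. Cos (d * t)) ` {0..<int e}"
  proof
    show "Cos ` {k. d dvd k} \<subseteq> (\<lambda>t. Cos (d * t)) ` {0..<int e}"
    proof
      fix c assume "c \<in> Cos ` {k. d dvd k}"
      then obtain i where i: "d dvd i" "c = Cos i" by auto
      have "d dvd m" by (simp add: m_def)
      then have "d dvd i mod m" using i(1) by (simp add: dvd_mod)
      then obtain t where t: "i mod m = d * t" by blast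
      have "0 \<le> i mod m" "i mod m < m" using m by simp_all
      then have "0 \<le> d * t" "d * t < d * int e" using t by (simp_all add: m_def)
      then have "0 \<le> t" "t < int e" using d
        by (simp_all add: zero_le_mult_iff) 
      moreover have "c = Cos (d * t)"
      proof -
        have "c = Cos i" by (rule i(2))
        also have "\<dots> = Cos (i mod m)" by (rule cmod)
        also have "\<dots> = Cos (d * t)" by (simp only: t)
        finally show ?thesis .
      qed
      ultimately show "c \<in> (\<lambda>t. Cos (d * t)) ` {0..<int e}" by (intro image_eqI[of _ _ t]) simp_all
    qed
  qed auto
  have injo: "inj_on (\<lambda>t. Cos (d * t)) {0..<int e}"
  proof (rule inj_onI)
    fix t t' assume t: "t \<in> {0..<int e}" and t': "t' \<in> {0..<int e}" and eq: "Cos (d * t) = Cos (d * t')"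
    have "F (d * t) \<in> Cos (d * t)" by (simp add: Cos_def)
    then have "F (d * t) \<in> Cos (d * t')" using eq by simp
    then obtain k where "F (d * t) = F k" "m dvd k - d * t'" by (auto simp: Cos_def)
    then have "m dvd d * t - d * t'" using inj by (simp add: inj_eq)
    then have "d * int e dvd d * (t - t')" by (simp add: m_def algebra_simps)
    then have "int e dvd t - t'" using d by simp
    moreover have "t - t' < int e" "t' - t < int e" using t t' by auto
    ultimately show "t = t'"
    proof -
      assume dv: "int e dvd t - t'" and l: "t - t' < int e" "t' - t < int e"
      show "t = t'"
      proof (rule ccontr)
        assume "t \<noteq> t'"
        then have "t - t' \<noteq> 0" by simp
        from dvd_imp_le_int[OF this dv] l show False by linarith
      qed
    qed
  qed
  have "card ((\<lambda>t. Cos (d * t)) ` {0..<int e}) = e" using card_image[OF injo] by simp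
  then show ?thesis using fam eqs by (simp add: m_def)
qed



lemma triv_iff:
  assumes "n \<ge> 2" "even n"
  shows "heis_trivial n (k, -k, hz k) \<longleftrightarrow> int n * 2 dvd k"
proof -
  obtain r where r: "n = 2 * r" using assms(2) by blast
  have rpos: "r > 0" using assms(1) r by simp
  have s1: "heis_trivial n (k, -k, hz k) \<longleftrightarrow> int n dvd k \<and> int n dvd - k \<and> int n dvd hz k"
    unfolding heis_trivial_def by (simp only: prod.case dvd_eq_mod_eq_0)
  have s2: "int n dvd hz k \<longleftrightarrow> int n dvd k * (k + 1) div 2"
    unfolding hz_def by (rule dvd_minus_iff)
  have s3: "int n dvd - k \<longleftrightarrow> int n dvd k" by (rule dvd_minus_iff)
  have "int n dvd k \<and> int n dvd k * (k + 1) div 2 \<longleftrightarrow> int n * 2 dvd k"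
  proof
    assume h: "int n dvd k \<and> int n dvd k * (k + 1) div 2"
    then obtain t where t: "k = int n * t" by blast
    have e1: "k * (k + 1) = 2 * (int r * t * (k + 1))" using t r by simp
    have "k * (k + 1) div 2 = int r * t * (k + 1)" by (subst e1) simp
    then have "int r * 2 dvd int r * (t * (k + 1))" using h r by (simp add: mult.assoc mult.commute)
    then have d2: "2 dvd t * (k + 1)" using rpos by (subst (asm) dvd_mult_cancel_left) simp_all
    have "k + 1 = 2 * (int r * t) + 1" using t r by simp
    then have "odd (k + 1)" by presburger
    with d2 have "even t" by simp
    then show "int n * 2 dvd k" using t by (auto simp: mult.commute)
  next
    assume h: "int n * 2 dvd k"
    then obtain t where t: "k = int n * 2 * t" by blast
    have e1: "k * (k + 1) = 2 * (int n * t * (k + 1))" using t by simp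
    have "k * (k + 1) div 2 = int n * t * (k + 1)" by (subst e1) simp
    then show "int n dvd k \<and> int n dvd k * (k + 1) div 2" using t by simp
  qed
  moreover have "int n * 2 dvd k \<Longrightarrow> int n dvd k" by (rule dvd_mult_left)
  ultimately show ?thesis using s1 s2 s3 by blast
qed



lemma conj1_parts: "heis_mult (heis_inv q) (heis_mult p q) =
   (fst p, fst (snd p), snd (snd p) + fst p * fst (snd q) - fst q * fst (snd p))"
  by (cases p; cases q) (simp add: heis_mult_def heis_inv_def algebra_simps)

lemma conj2_parts: "heis_mult q (heis_mult p (heis_inv q)) =
   (fst p, fst (snd p), snd (snd p) - fst p * fst (snd q) + fst q * fst (snd p))"
  by (cases p; cases q) (simp add: heis_mult_def heis_inv_def algebra_simps)

lemma triv_dvd: "heis_trivial n p \<longleftrightarrow> int n dvd fst p \<and> int n dvd fst (snd p) \<and> int n dvd snd (snd p)"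
  by (cases p) (simp add: heis_trivial_def dvd_eq_mod_eq_0)

lemma triv_conj1: "heis_trivial n p \<Longrightarrow> heis_trivial n (heis_mult (heis_inv q) (heis_mult p q))"
  unfolding conj1_parts triv_dvd by simp

lemma triv_conj2: "heis_trivial n p \<Longrightarrow> heis_trivial n (heis_mult q (heis_mult p (heis_inv q)))"
  unfolding conj2_parts triv_dvd by simp

theorem mainTheorem6:
  fixes n :: nat and g :: mat2
  assumes "n \<ge> 2" and "even n" and "g \<in> Delta"
  shows "ram_index (ker_phi n) (ker_psi n) (g *v cusp_one) = 2
       \<and> ram_index (ker_phi n) Delta (g *v cusp_one) = 2 * n"
proof -
  obtain u where gu: "g = eval_SL u" using assms(3) by (auto simp: Delta_def)
  define gi where "gi = eval_SL (invw u)"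
  have gg: "gi ** (g ** X) = X" for X
  proof -
    have "gi ** (g ** X) = (gi ** g) ** X" by (simp add: matrix_mul_assoc)
    then show ?thesis by (simp add: gi_def gu eval_SL_invw2)
  qed
  have gi1: "gi ** g = mat 1" by (simp add: gi_def gu eval_SL_invw2)
  have gg': "X ** gi ** g = X" for X
  proof -
    have "X ** gi ** g = X ** (gi ** g)" by (simp add: matrix_mul_assoc)
    then show ?thesis by (simp add: gi1)
  qed
  define F where "F k = g ** Cmat k ** gi" for k
  have hom: "F a ** F b = F (a + b)" for a b
    by (simp add: F_def matrix_mul_assoc gg' flip: Cmat_add)
  have inj: "inj F"
  proof (rule injI)
    fix a b assume "F a = F b"
    then have "gi ** (F a ** g) = gi ** (F b ** g)" by simp
    moreover have "gi ** (F k ** g) = Cmat k" for k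
      by (simp add: F_def matrix_mul_assoc gg' gi1)
    ultimately show "a = b" using Cmat_inj by metis
  qed
  have SD: "cusp_stab Delta (g *v cusp_one) = F ` {k. 1 dvd k}"
  proof -
    have "Delta = {eval_SL w | w. (\<lambda>_. True) (eval_H w)}" by (auto simp: Delta_def)
    from stab_char[OF this, of u] show ?thesis by (simp add: F_def gu gi_def)
  qed
  have Spsi: "cusp_stab (ker_psi n) (g *v cusp_one) = F ` {k. int n dvd k}"
  proof -
    let ?c = "\<lambda>p. int n dvd fst p \<and> int n dvd fst (snd p)"
    have "ker_psi n = {eval_SL w | w. ?c (eval_H w)}"
      by (simp add: ker_psi_def eval_psi_H dvd_eq_mod_eq_0)
    from stab_char[OF this, of u] show ?thesis
      by (simp add: F_def gu gi_def conj1_parts conj2_parts)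
  qed
  have Sphi: "cusp_stab (ker_phi n) (g *v cusp_one) = F ` {k. int n * 2 dvd k}"
  proof -
    have "ker_phi n = {eval_SL w | w. heis_trivial n (eval_H w)}" by (simp add: ker_phi_def)
    from stab_char[OF this, of u] triv_conj1 triv_conj2 show ?thesis
      by (simp add: F_def gu gi_def triv_iff[OF assms(1,2)])
  qed
  have n0: "int n > 0" using assms(1) by simp
  have i1: "card ((\<lambda>x. (\<lambda>h. x ** h) ` (F ` {k. int n * int 2 dvd k})) ` (F ` {k. int n dvd k})) = 2"
    by (rule index_lemma[OF hom inj n0]) simp
  have i2: "card ((\<lambda>x. (\<lambda>h. x ** h) ` (F ` {k. 1 * int (2 * n) dvd k})) ` (F ` {k. 1 dvd k})) = 2 * n"
    by (rule index_lemma[OF hom inj]) (use assms(1) in simp_all)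
  have e2: "{k. 1 * int (2 * n) dvd k} = {k. int n * 2 dvd k}" by (simp add: mult.commute)
  have e1: "{k::int. 1 dvd k} = UNIV" by simp
  show ?thesis
    unfolding ram_index_def subgroup_index_def SD Spsi Sphi e1
    using i1 i2 e2 by simp
qed

end
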